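(* Let $\hat J$, $\hat\Delta_{\mathbf u,\mathbf v}$, $\hat\phi^+_{\mathbf u}$, $\hat\phi^-_{\mathbf u}$ be as in the context, and let the suboptimal policy be $\hat\mu^*(\mathbf Q)\in\arg\min_{\mathbf u\in\mathcal U}\hat J(\mathbf Q,\mathbf u)$. Then: (1) Let $\mathbf 0\in\mathcal U$ be the all-zero action and $\hat{\mathcal Q}_0=\{\mathbf Q\in\mathcal Q: Q_{n,m}\le\hat\phi^+_{\mathbf 0}(\mathbf Q_{-n,-m})\ \forall n\in\mathcal N,\ m\in\mathcal M_n\}$. For every $\mathbf Q\in\hat{\mathcal Q}_0$, $\hat\Delta_{\mathbf 0,\mathbf v}(\mathbf Q)\le0$ for all $\mathbf v\in\mathcal U$, so $\mathbf 0\in\arg\min_{\mathbf u}\hat J(\mathbf Q,\mathbf u)$. (2) Let $\mathbf u\in\mathcal U$ with $u_n=m\in\mathcal M_n$ for some $n\in\mathcal N$. Then for every $\mathbf Q\in\mathcal Q$ with $Q_{n,m}\ge\hat\phi^-_{\mathbf u}(\mathbf Q_{-n,-m})$ we have $\hat\Delta_{\mathbf u,\mathbf v}(\mathbf Q)\le0$ for all $\mathbf v\in\mathcal U$, so $\mathbf u\in\arg\min_{\mathbf v}\hat J(\mathbf Q,\mathbf v)$. Moreover, if $u_0=m\in\mathcal M_0$, then $\hat\phi^-_{\mathbf u}(\mathbf Q_{-0,-m})$ is monotonically non-increasing in $Q_{n,m}$ for every $n\in\mathcal N_m$.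
   Context: Model. Let $N\ge 1$, $\mathcal N=\{0,1,\dots,N\}$ (base station $0$ is the macro base station, MBS) and $\mathcal N^+=\{1,\dots,N\}$ (small base stations, SBSs). Let $\mathcal M=\{1,\dots,M\}$ be the set of contents. For each $n\in\mathcal N$ let $\mathcal M_n\subseteq\mathcal M$ be the set of contents cached at BS $n$, with $\mathcal M_0=\mathcal M$; put $\tilde{\mathcal M}_n=\mathcal M_n\cup\{0\}$ and $\mathcal N_m=\{n\in\mathcal N^+: m\in\mathcal M_n\}$. Powers $p(n,m)\ge 0$ are given for $n\in\mathcal N$, $m\in\mathcal M_n$, and $p(n,0)=0$. A weight $w\ge 0$ is fixed. The feasible action space is $\mathcal U=\{\mathbf u=(u_n)_{n\in\mathcal N}: u_n\in\tilde{\mathcal M}_n\ \forall n,\ u_0\sum_{n\in\mathcal N^+}u_n=0\}$. A state is $\mathbf Q=(Q_{n,m})_{n\in\mathcal N,m\in\mathcal M_n}$ with $Q_{n,m}\in\mathcal Q_{n,m}=\{0,1,\dots,N_{n,m}\}$ for given positive integers $N_{n,m}$; $\mathcal Q=\prod_{n\in\mathcal N}\prod_{m\in\mathcal M_n}\mathcal Q_{n,m}$. Arrivals $A_{n,m}$ ($n\in\mathcal N$, $m\in\mathcal M$) are mutually independent nonnegative-integer random variables with fixed distributions, i.i.d. across time slots; $\tilde A_{0,m}=A_{0,m}+\sum_{n\in\mathcal N^+\setminus\mathcal N_m}A_{n,m}$. Given state $\mathbf Q$ and action $\mathbf u$, the next state $\mathbf Q'$ is $Q'_{0,m}=\min\{\mathbf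 1(u_0\neq m)Q_{0,m}+\tilde A_{0,m},N_{0,m}\}$ for $m\in\mathcal M_0$ and $Q'_{n,m}=\min\{\mathbf 1(u_0\neq m\text{ and }u_n\neq m)Q_{n,m}+A_{n,m},N_{n,m}\}$ for $n\in\mathcal N^+$, $m\in\mathcal M_n$; $\mathbb E$ denotes expectation over the arrivals. The per-stage cost is $g(\mathbf Q,\mathbf u)=d(\mathbf Q)+w\,p(\mathbf u)$ with $d(\mathbf Q)=\sum_{n\in\mathcal N}\sum_{m\in\mathcal M_n}Q_{n,m}$ and $p(\mathbf u)=\sum_{n\in\mathcal N}p(n,u_n)$. Per-BS-content value functions. Let $\hat\mu$ be a randomized base policy: a fixed probability distribution on $\mathcal U$ from which the action is drawn each slot independently of state and arrivals; $\mathbb E^{\hat\mu}$ is expectation over $\mathbf u\sim\hat\mu$. For $n\in\mathcal N$, $m\in\mathcal M_n$ let $g_{n,m}(Q_{n,m},\mathbf u)=Q_{n,m}+w\mathbf 1(u_n=m)p(n,m)$ and $\Pr[Q'_{n,m}\mid Q_{n,m},\mathbf u]$ the transition probability of the $(n,m)$ component. Fix $Q^\dagger_{n,m}\in\mathcal Q_{n,m}$; define $\hat V^0_{n,m}\equiv0$, $\hat J^{l+1}_{n,m}(Q_{n,m})=\mathbb E^{\hat\mu}[g_{n,m}(Q_{n,m},\mathbf u)]+\sum_{Q'_{n,m}}\mathbb E^{\hat\mu}[\Pr[Q'_{n,m}\mid Q_{n,m},\mathbf u]]\hat V^l_{n,m}(Q'_{n,m})$, and $\hat V^{l+1}_{n,m}(Q_{n,m})=\hat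 J^{l+1}_{n,m}(Q_{n,m})-\hat J^{l+1}_{n,m}(Q^\dagger_{n,m})$. It is assumed that $\hat V^l_{n,m}\to\hat V_{n,m}$ pointwise; $\hat V_{n,m}$ then solves the per-BS-content fixed-point equation $\hat\theta_{n,m}+\hat V_{n,m}(Q_{n,m})=\mathbb E^{\hat\mu}[g_{n,m}(Q_{n,m},\mathbf u)]+\sum_{Q'_{n,m}}\mathbb E^{\hat\mu}[\Pr[Q'_{n,m}\mid Q_{n,m},\mathbf u]]\hat V_{n,m}(Q'_{n,m})$. Further notation. $\hat J(\mathbf Q,\mathbf u)=g(\mathbf Q,\mathbf u)+\sum_{n\in\mathcal N}\sum_{m\in\mathcal M_n}\mathbb E[\hat V_{n,m}(Q'_{n,m})]$ where $\mathbf Q'$ is the next state from $(\mathbf Q,\mathbf u)$; $\hat\Delta_{\mathbf u,\mathbf v}(\mathbf Q)=\hat J(\mathbf Q,\mathbf u)-\hat J(\mathbf Q,\mathbf v)$. For $(n,m)$ with $m\in\mathcal M_n$, $\mathbf Q_{-n,-m}=(Q_{i,j})_{(i,j)\neq(n,m)}$. Define $\hat\Phi_{\mathbf u}(\mathbf Q_{-n,-m})=\{Q_{n,m}\in\mathcal Q_{n,m}:\hat\Delta_{\mathbf u,\mathbf v}(Q_{n,m},\mathbf Q_{-n,-m})\le0\ \forall\mathbf v\in\mathcal U,\ \mathbf v\neq\mathbf u\}$, $\hat\phi^+_{\mathbf u}(\mathbf Q_{-n,-m})=\max\hat\Phi_{\mathbf u}(\mathbf Q_{-n,-m})$ if nonempty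 and $-\infty$ otherwise, $\hat\phi^-_{\mathbf u}(\mathbf Q_{-n,-m})=\min\hat\Phi_{\mathbf u}(\mathbf Q_{-n,-m})$ if nonempty and $+\infty$ otherwise. *)

theory Defs
  imports "HOL-Probability.Probability"
begin

(* Parameters used throughout:
   N     : number of SBSs (BSs are 0..N, 0 = MBS)
   M     : number of contents (contents are 1..M)
   C     : C n = set of contents cached at BS n  (C 0 = {1..M})
   Cap   : Cap n m = buffer size N_{n,m}
   arr   : arr n m = distribution of A_{n,m} (n in 0..N, m in 1..M)
   pw    : pw n m = power p(n,m), with pw n 0 = 0
   w     : weight
   V     : the per-BS-content value functions \<hat>V_{n,m}
   mu    : the randomized base policy (a pmf on actions)
   Qd    : the reference states Q^dagger_{n,m}                        *)

definition idx :: "nat \<Rightarrow> (nat \<Rightarrow> nat set) \<Rightarrow> (nat \<times> nat) set" where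
  "idx N C = {(n, m). n \<le> N \<and> m \<in> C n}"

definition Nm :: "nat \<Rightarrow> (nat \<Rightarrow> nat set) \<Rightarrow> nat \<Rightarrow> nat set" where
  "Nm N C m = {n \<in> {1..N}. m \<in> C n}"

definition actions :: "nat \<Rightarrow> (nat \<Rightarrow> nat set) \<Rightarrow> (nat \<Rightarrow> nat) set" where
  "actions N C = {u. (\<forall>n\<le>N. u n \<in> insert 0 (C n)) \<and> (\<forall>n>N. u n = 0)
                      \<and> u 0 * (\<Sum>n\<in>{1..N}. u n) = 0}"

definition states :: "nat \<Rightarrow> (nat \<Rightarrow> nat set) \<Rightarrow> (nat \<Rightarrow> nat \<Rightarrow> nat) \<Rightarrow> (nat \<times> nat \<Rightarrow> nat) set" where
  "states N C Cap = {Q. (\<forall>(n, m)\<in>idx N C. Q (n, m) \<le> Cap n m) \<and> (\<forall>x. x \<notin> idx N C \<longrightarrow> Q x = 0)}"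

definition arrivals :: "nat \<Rightarrow> nat \<Rightarrow> (nat \<Rightarrow> nat \<Rightarrow> nat pmf) \<Rightarrow> (nat \<times> nat \<Rightarrow> nat) pmf" where
  "arrivals N M arr = Pi_pmf ({..N} \<times> {1..M}) 0 (\<lambda>(n, m). arr n m)"

definition comp_next :: "nat \<Rightarrow> (nat \<Rightarrow> nat set) \<Rightarrow> (nat \<Rightarrow> nat \<Rightarrow> nat) \<Rightarrow> nat \<Rightarrow> nat \<Rightarrow> nat
      \<Rightarrow> (nat \<Rightarrow> nat) \<Rightarrow> (nat \<times> nat \<Rightarrow> nat) \<Rightarrow> nat" where
  "comp_next N C Cap n m q u A =
     (if n = 0 then
        min ((if u 0 \<noteq> m then q else 0) + (A (0, m) + (\<Sum>i\<in>{1..N} - Nm N C m. A (i, m)))) (Cap 0 m)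
      else
        min ((if u 0 \<noteq> m \<and> u n \<noteq> m then q else 0) + A (n, m)) (Cap n m))"

definition next_state :: "nat \<Rightarrow> (nat \<Rightarrow> nat set) \<Rightarrow> (nat \<Rightarrow> nat \<Rightarrow> nat)
      \<Rightarrow> (nat \<times> nat \<Rightarrow> nat) \<Rightarrow> (nat \<Rightarrow> nat) \<Rightarrow> (nat \<times> nat \<Rightarrow> nat) \<Rightarrow> (nat \<times> nat \<Rightarrow> nat)" where
  "next_state N C Cap Q u A =
     (\<lambda>(n, m). if (n, m) \<in> idx N C then comp_next N C Cap n m (Q (n, m)) u A else 0)"

definition delay :: "nat \<Rightarrow> (nat \<Rightarrow> nat set) \<Rightarrow> (nat \<times> nat \<Rightarrow> nat) \<Rightarrow> real" where
  "delay N C Q = (\<Sum>(n, m)\<in>idx N C. real (Q (n, m)))"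

definition power :: "nat \<Rightarrow> (nat \<Rightarrow> nat \<Rightarrow> real) \<Rightarrow> (nat \<Rightarrow> nat) \<Rightarrow> real" where
  "power N pw u = (\<Sum>n\<in>{..N}. pw n (u n))"

definition g_comp :: "(nat \<Rightarrow> nat \<Rightarrow> real) \<Rightarrow> real \<Rightarrow> nat \<Rightarrow> nat \<Rightarrow> nat \<Rightarrow> (nat \<Rightarrow> nat) \<Rightarrow> real" where
  "g_comp pw w n m q u = real q + w * (if u n = m then pw n m else 0)"

definition trans_prob :: "nat \<Rightarrow> nat \<Rightarrow> (nat \<Rightarrow> nat set) \<Rightarrow> (nat \<Rightarrow> nat \<Rightarrow> nat) \<Rightarrow> (nat \<Rightarrow> nat \<Rightarrow> nat pmf)
      \<Rightarrow> nat \<Rightarrow> nat \<Rightarrow> nat \<Rightarrow> (nat \<Rightarrow> nat) \<Rightarrow> nat \<Rightarrow> real" where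
  "trans_prob N M C Cap arr n m q u q' =
     measure_pmf.prob (arrivals N M arr) {A. comp_next N C Cap n m q u A = q'}"

definition J_step :: "nat \<Rightarrow> nat \<Rightarrow> (nat \<Rightarrow> nat set) \<Rightarrow> (nat \<Rightarrow> nat \<Rightarrow> nat) \<Rightarrow> (nat \<Rightarrow> nat \<Rightarrow> nat pmf)
      \<Rightarrow> (nat \<Rightarrow> nat \<Rightarrow> real) \<Rightarrow> real \<Rightarrow> (nat \<Rightarrow> nat) pmf
      \<Rightarrow> (nat \<Rightarrow> nat \<Rightarrow> nat \<Rightarrow> real) \<Rightarrow> nat \<Rightarrow> nat \<Rightarrow> nat \<Rightarrow> real" where
  "J_step N M C Cap arr pw w mu Vprev n m q =
     measure_pmf.expectation mu (\<lambda>u. g_comp pw w n m q u)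
     + (\<Sum>q'\<in>{0..Cap n m}.
          measure_pmf.expectation mu (\<lambda>u. trans_prob N M C Cap arr n m q u q') * Vprev n m q')"

primrec V_iter :: "nat \<Rightarrow> nat \<Rightarrow> (nat \<Rightarrow> nat set) \<Rightarrow> (nat \<Rightarrow> nat \<Rightarrow> nat) \<Rightarrow> (nat \<Rightarrow> nat \<Rightarrow> nat pmf)
      \<Rightarrow> (nat \<Rightarrow> nat \<Rightarrow> real) \<Rightarrow> real \<Rightarrow> (nat \<Rightarrow> nat) pmf \<Rightarrow> (nat \<Rightarrow> nat \<Rightarrow> nat)
      \<Rightarrow> nat \<Rightarrow> nat \<Rightarrow> nat \<Rightarrow> nat \<Rightarrow> real" where
  "V_iter N M C Cap arr pw w mu Qd 0 n m q = 0"
| "V_iter N M C Cap arr pw w mu Qd (Suc l) n m q =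
     J_step N M C Cap arr pw w mu (V_iter N M C Cap arr pw w mu Qd l) n m q
     - J_step N M C Cap arr pw w mu (V_iter N M C Cap arr pw w mu Qd l) n m (Qd n m)"

definition Jhat :: "nat \<Rightarrow> nat \<Rightarrow> (nat \<Rightarrow> nat set) \<Rightarrow> (nat \<Rightarrow> nat \<Rightarrow> nat) \<Rightarrow> (nat \<Rightarrow> nat \<Rightarrow> nat pmf)
      \<Rightarrow> (nat \<Rightarrow> nat \<Rightarrow> real) \<Rightarrow> real \<Rightarrow> (nat \<Rightarrow> nat \<Rightarrow> nat \<Rightarrow> real)
      \<Rightarrow> (nat \<times> nat \<Rightarrow> nat) \<Rightarrow> (nat \<Rightarrow> nat) \<Rightarrow> real" where
  "Jhat N M C Cap arr pw w V Q u =
     delay N C Q + w * power N pw u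
     + (\<Sum>(n, m)\<in>idx N C.
          measure_pmf.expectation (arrivals N M arr) (\<lambda>A. V n m (next_state N C Cap Q u A (n, m))))"

definition Delta :: "nat \<Rightarrow> nat \<Rightarrow> (nat \<Rightarrow> nat set) \<Rightarrow> (nat \<Rightarrow> nat \<Rightarrow> nat) \<Rightarrow> (nat \<Rightarrow> nat \<Rightarrow> nat pmf)
      \<Rightarrow> (nat \<Rightarrow> nat \<Rightarrow> real) \<Rightarrow> real \<Rightarrow> (nat \<Rightarrow> nat \<Rightarrow> nat \<Rightarrow> real)
      \<Rightarrow> (nat \<Rightarrow> nat) \<Rightarrow> (nat \<Rightarrow> nat) \<Rightarrow> (nat \<times> nat \<Rightarrow> nat) \<Rightarrow> real" where
  "Delta N M C Cap arr pw w V u v Q = Jhat N M C Cap arr pw w V Q u - Jhat N M C Cap arr pw w V Q v"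

(* \<hat>\<Phi>_u(Q_{-n,-m}): only the components of Q other than (n,m) matter *)
definition Phi :: "nat \<Rightarrow> nat \<Rightarrow> (nat \<Rightarrow> nat set) \<Rightarrow> (nat \<Rightarrow> nat \<Rightarrow> nat) \<Rightarrow> (nat \<Rightarrow> nat \<Rightarrow> nat pmf)
      \<Rightarrow> (nat \<Rightarrow> nat \<Rightarrow> real) \<Rightarrow> real \<Rightarrow> (nat \<Rightarrow> nat \<Rightarrow> nat \<Rightarrow> real)
      \<Rightarrow> (nat \<Rightarrow> nat) \<Rightarrow> nat \<Rightarrow> nat \<Rightarrow> (nat \<times> nat \<Rightarrow> nat) \<Rightarrow> nat set" where
  "Phi N M C Cap arr pw w V u n m Q =
     {q \<in> {0..Cap n m}. \<forall>v\<in>actions N C. v \<noteq> u \<longrightarrow>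
        Delta N M C Cap arr pw w V u v (Q((n, m) := q)) \<le> 0}"

definition phi_plus :: "nat \<Rightarrow> nat \<Rightarrow> (nat \<Rightarrow> nat set) \<Rightarrow> (nat \<Rightarrow> nat \<Rightarrow> nat) \<Rightarrow> (nat \<Rightarrow> nat \<Rightarrow> nat pmf)
      \<Rightarrow> (nat \<Rightarrow> nat \<Rightarrow> real) \<Rightarrow> real \<Rightarrow> (nat \<Rightarrow> nat \<Rightarrow> nat \<Rightarrow> real)
      \<Rightarrow> (nat \<Rightarrow> nat) \<Rightarrow> nat \<Rightarrow> nat \<Rightarrow> (nat \<times> nat \<Rightarrow> nat) \<Rightarrow> ereal" where
  "phi_plus N M C Cap arr pw w V u n m Q =
     (let S = Phi N M C Cap arr pw w V u n m Q in if S = {} then -\<infinity> else ereal (real (Max S)))"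

definition phi_minus :: "nat \<Rightarrow> nat \<Rightarrow> (nat \<Rightarrow> nat set) \<Rightarrow> (nat \<Rightarrow> nat \<Rightarrow> nat) \<Rightarrow> (nat \<Rightarrow> nat \<Rightarrow> nat pmf)
      \<Rightarrow> (nat \<Rightarrow> nat \<Rightarrow> real) \<Rightarrow> real \<Rightarrow> (nat \<Rightarrow> nat \<Rightarrow> nat \<Rightarrow> real)
      \<Rightarrow> (nat \<Rightarrow> nat) \<Rightarrow> nat \<Rightarrow> nat \<Rightarrow> (nat \<times> nat \<Rightarrow> nat) \<Rightarrow> ereal" where
  "phi_minus N M C Cap arr pw w V u n m Q =
     (let S = Phi N M C Cap arr pw w V u n m Q in if S = {} then \<infinity> else ereal (real (Min S)))"

end

theory Submission
  imports Defs
begin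

lemma pmf_bnd_int:
  fixes f :: "'a \<Rightarrow> real"
  assumes "\<And>x. \<bar>f x\<bar> \<le> B"
  shows "integrable (measure_pmf p) f"
  by (rule measure_pmf.integrable_const_bound[where B=B]) (auto simp: assms)

lemma pmf_conv:
  fixes X :: "'a \<Rightarrow> nat" and f :: "nat \<Rightarrow> real"
  assumes "\<And>A. X A \<le> K"
  shows "measure_pmf.expectation p (\<lambda>A. f (X A))
       = (\<Sum>q\<in>{0..K}. measure_pmf.prob p {A. X A = q} * f q)"
proof -
  have eq: "\<And>A. f (X A) = (\<Sum>q\<in>{0..K}. indicator {A. X A = q} A * f q)"
  proof -
    fix A
    have "(\<Sum>q\<in>{0..K}. indicator {A. X A = q} A * f q) = (\<Sum>q\<in>{X A}. indicator {A. X A = q} A * f q)"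
      by (rule sum.mono_neutral_right) (use assms in auto)
    then show "f (X A) = (\<Sum>q\<in>{0..K}. indicator {A. X A = q} A * f q)" by simp
  qed
  have "measure_pmf.expectation p (\<lambda>A. f (X A))
      = measure_pmf.expectation p (\<lambda>A. \<Sum>q\<in>{0..K}. indicator {A. X A = q} A * f q)"
    by (simp only: eq)
  also have "\<dots> = (\<Sum>q\<in>{0..K}. measure_pmf.expectation p (\<lambda>A. indicator {A. X A = q} A * f q))"
    by (intro Bochner_Integration.integral_sum integrable_mult_left pmf_bnd_int[where B=1]) (auto simp: indicator_def)
  also have "\<dots> = (\<Sum>q\<in>{0..K}. measure_pmf.prob p {A. X A = q} * f q)"
    by simp
  finally show ?thesis .
qed

lemma comp_next_le: "comp_next N C Cap n m q u A \<le> Cap n m"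
  by (simp add: comp_next_def)

lemma comp_next_mono: "q1 \<le> q2 \<Longrightarrow> comp_next N C Cap n m q1 u A \<le> comp_next N C Cap n m q2 u A"
  by (auto simp: comp_next_def min_def)

lemma bnd_fin: "(x::nat) \<le> K \<Longrightarrow> \<bar>f x :: real\<bar> \<le> (\<Sum>q\<in>{0..K}. \<bar>f q\<bar>)"
  by (rule member_le_sum[of x "{0..K}" "\<lambda>q. \<bar>f q\<bar>"]) auto

lemma E_int: "integrable (measure_pmf p) (\<lambda>A. (f::nat\<Rightarrow>real) (comp_next N C Cap n m q u A))"
  by (rule pmf_bnd_int[where B="\<Sum>q\<in>{0..Cap n m}. \<bar>f q\<bar>"]) (rule bnd_fin[OF comp_next_le])

lemma E_mono:
  assumes "\<And>q1 q2. q1 \<le> q2 \<Longrightarrow> q2 \<le> Cap n m \<Longrightarrow> (f::nat\<Rightarrow>real) q1 \<le> f q2" and "q1 \<le> q2"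
  shows "measure_pmf.expectation p (\<lambda>A. f (comp_next N C Cap n m q1 u A))
       \<le> measure_pmf.expectation p (\<lambda>A. f (comp_next N C Cap n m q2 u A))"
  by (intro integral_mono E_int assms comp_next_mono comp_next_le)

lemma tp_conv: "(\<Sum>q'\<in>{0..Cap n m}. trans_prob N M C Cap arr n m q u q' * f q')
   = measure_pmf.expectation (arrivals N M arr) (\<lambda>A. f (comp_next N C Cap n m q u A))"
  unfolding trans_prob_def by (rule pmf_conv[symmetric]) (rule comp_next_le)

lemma tp_int: "integrable (measure_pmf mu) (\<lambda>u. trans_prob N M C Cap arr n m q u q')"
  by (rule pmf_bnd_int[where B=1]) (simp add: trans_prob_def)

lemma V_iter_mono:
  "\<forall>q1 q2. q1 \<le> q2 \<longrightarrow> q2 \<le> Cap n m \<longrightarrow>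
     V_iter N M C Cap arr pw w mu Qd l n m q1 \<le> V_iter N M C Cap arr pw w mu Qd l n m q2"
proof (induction l)
  case 0
  then show ?case by simp
next
  case (Suc l)
  let ?V = "V_iter N M C Cap arr pw w mu Qd l"
  show ?case
  proof (intro allI impI)
    fix q1 q2 :: nat assume le: "q1 \<le> q2" "q2 \<le> Cap n m"
    have gint: "integrable (measure_pmf mu) (\<lambda>u. g_comp pw w n m q u)" for q
      by (rule pmf_bnd_int[where B="real q + \<bar>w * pw n m\<bar>"]) (auto simp: g_comp_def)
    have ga: "measure_pmf.expectation mu (\<lambda>u. g_comp pw w n m q1 u)
        \<le> measure_pmf.expectation mu (\<lambda>u. g_comp pw w n m q2 u)"
      by (rule integral_mono[OF gint gint]) (use le in \<open>auto simp: g_comp_def\<close>)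
    have sw: "(\<Sum>q'\<in>{0..Cap n m}. measure_pmf.expectation mu (\<lambda>u. trans_prob N M C Cap arr n m q u q') * ?V n m q')
       = measure_pmf.expectation mu (\<lambda>u. \<Sum>q'\<in>{0..Cap n m}. trans_prob N M C Cap arr n m q u q' * ?V n m q')" for q
      by (subst Bochner_Integration.integral_sum) (auto intro!: integrable_mult_left tp_int)
    have sint: "integrable (measure_pmf mu) (\<lambda>u. \<Sum>q'\<in>{0..Cap n m}. trans_prob N M C Cap arr n m q u q' * ?V n m q')" for q
      by (auto intro!: integrable_mult_left tp_int)
    have gb: "measure_pmf.expectation mu (\<lambda>u. \<Sum>q'\<in>{0..Cap n m}. trans_prob N M C Cap arr n m q1 u q' * ?V n m q')
       \<le> measure_pmf.expectation mu (\<lambda>u. \<Sum>q'\<in>{0..Cap n m}. trans_prob N M C Cap arr n m q2 u q' * ?V n m q')"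
    proof (rule integral_mono[OF sint sint])
      fix u
      show "(\<Sum>q'\<in>{0..Cap n m}. trans_prob N M C Cap arr n m q1 u q' * ?V n m q')
         \<le> (\<Sum>q'\<in>{0..Cap n m}. trans_prob N M C Cap arr n m q2 u q' * ?V n m q')"
        unfolding tp_conv by (rule E_mono) (use Suc.IH le in auto)
    qed
    show "V_iter N M C Cap arr pw w mu Qd (Suc l) n m q1 \<le> V_iter N M C Cap arr pw w mu Qd (Suc l) n m q2"
      using ga gb by (simp add: J_step_def sw)
  qed
qed

definition EV :: "nat \<Rightarrow> nat \<Rightarrow> (nat \<Rightarrow> nat set) \<Rightarrow> (nat \<Rightarrow> nat \<Rightarrow> nat) \<Rightarrow> (nat \<Rightarrow> nat \<Rightarrow> nat pmf)
      \<Rightarrow> (nat \<Rightarrow> nat \<Rightarrow> nat \<Rightarrow> real) \<Rightarrow> nat \<Rightarrow> nat \<Rightarrow> nat \<Rightarrow> (nat \<Rightarrow> nat) \<Rightarrow> real" where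
  "EV N M C Cap arr V n m q u = measure_pmf.expectation (arrivals N M arr) (\<lambda>A. V n m (comp_next N C Cap n m q u A))"

definition reset :: "(nat \<Rightarrow> nat) \<Rightarrow> nat \<Rightarrow> nat \<Rightarrow> bool" where
  "reset u n m = (u 0 = m \<or> (n \<noteq> 0 \<and> u n = m))"

lemma Jhat_split:
  assumes "(n, m) \<in> idx N C" "finite (idx N C)"
  shows "Jhat N M C Cap arr pw w V (Q((n, m) := q)) u
     = real q + w * power N pw u + EV N M C Cap arr V n m q u
       + ((\<Sum>(i,j)\<in>idx N C - {(n,m)}. real (Q (i, j)))
          + (\<Sum>(i,j)\<in>idx N C - {(n,m)}. EV N M C Cap arr V i j (Q (i,j)) u))"
proof -
  have d: "delay N C (Q((n, m) := q)) = real q + (\<Sum>(i,j)\<in>idx N C - {(n,m)}. real (Q (i, j)))"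
    unfolding delay_def
    by (subst sum.remove[OF assms(2) assms(1)]) (auto intro!: sum.cong split: if_splits)
  have e: "(\<Sum>(i, j)\<in>idx N C.
          measure_pmf.expectation (arrivals N M arr) (\<lambda>A. V i j (next_state N C Cap (Q((n, m) := q)) u A (i, j))))
       = EV N M C Cap arr V n m q u + (\<Sum>(i,j)\<in>idx N C - {(n,m)}. EV N M C Cap arr V i j (Q (i,j)) u)"
    by (subst sum.remove[OF assms(2) assms(1)])
       (use assms(1) in \<open>auto simp: EV_def next_state_def intro!: sum.cong split: if_splits\<close>)
  show ?thesis unfolding Jhat_def d e by simp
qed

lemma EV_reset: "reset u n m \<Longrightarrow> EV N M C Cap arr V n m q u = EV N M C Cap arr V n m q' u"
  unfolding EV_def reset_def by (auto simp: comp_next_def)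

lemma EV_nreset: "\<not> reset u n m \<Longrightarrow> \<not> reset v n m \<Longrightarrow> EV N M C Cap arr V n m q u = EV N M C Cap arr V n m q v"
  unfolding EV_def reset_def by (auto simp: comp_next_def)

lemma EV_mono:
  assumes "\<And>q1 q2. q1 \<le> q2 \<Longrightarrow> q2 \<le> Cap n m \<Longrightarrow> V n m q1 \<le> V n m q2" "q1 \<le> q2"
  shows "EV N M C Cap arr V n m q1 u \<le> EV N M C Cap arr V n m q2 u"
  unfolding EV_def by (rule E_mono[where f="V n m", OF assms])

lemma key:
  assumes "(n, m) \<in> idx N C" "finite (idx N C)"
    and Vm: "\<And>q1 q2. q1 \<le> q2 \<Longrightarrow> q2 \<le> Cap n m \<Longrightarrow> V n m q1 \<le> V n m q2" and le: "q1 \<le> q2"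
  shows "reset u n m \<Longrightarrow> Delta N M C Cap arr pw w V u v (Q((n,m):=q2)) \<le> Delta N M C Cap arr pw w V u v (Q((n,m):=q1))"
    and "\<not> reset u n m \<Longrightarrow> Delta N M C Cap arr pw w V u v (Q((n,m):=q1)) \<le> Delta N M C Cap arr pw w V u v (Q((n,m):=q2))"
proof -
  note sp = Jhat_split[OF assms(1,2)]
  have m1: "EV N M C Cap arr V n m q1 x \<le> EV N M C Cap arr V n m q2 x" for x
    by (rule EV_mono[where V=V and n=n and m=m and Cap=Cap, OF Vm le])
  assume r: "reset u n m"
  show "Delta N M C Cap arr pw w V u v (Q((n,m):=q2)) \<le> Delta N M C Cap arr pw w V u v (Q((n,m):=q1))"
  proof (cases "reset v n m")
    case True
    then show ?thesis using r unfolding Delta_def sp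
      using EV_reset[OF r, of N M C Cap arr V q2 q1] EV_reset[OF True, of N M C Cap arr V q2 q1] by simp
  next
    case False
    then show ?thesis using r m1[of v] unfolding Delta_def sp
      using EV_reset[OF r, of N M C Cap arr V q2 q1] by simp
  qed
next
  note sp = Jhat_split[OF assms(1,2)]
  have m1: "EV N M C Cap arr V n m q1 x \<le> EV N M C Cap arr V n m q2 x" for x
    by (rule EV_mono[where V=V and n=n and m=m and Cap=Cap, OF Vm le])
  assume r: "\<not> reset u n m"
  show "Delta N M C Cap arr pw w V u v (Q((n,m):=q1)) \<le> Delta N M C Cap arr pw w V u v (Q((n,m):=q2))"
  proof (cases "reset v n m")
    case True
    then show ?thesis using r m1[of u] unfolding Delta_def sp
      using EV_reset[OF True, of N M C Cap arr V q2 q1] by simp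
  next
    case False
    then show ?thesis unfolding Delta_def sp
      using EV_nreset[OF r False, of N M C Cap arr V q1] EV_nreset[OF r False, of N M C Cap arr V q2] by simp
  qed
qed

theorem theorem2:
  fixes N M :: nat
    and C :: "nat \<Rightarrow> nat set"
    and Cap :: "nat \<Rightarrow> nat \<Rightarrow> nat"
    and arr :: "nat \<Rightarrow> nat \<Rightarrow> nat pmf"
    and pw :: "nat \<Rightarrow> nat \<Rightarrow> real"
    and w :: real
    and mu :: "(nat \<Rightarrow> nat) pmf"
    and Qd :: "nat \<Rightarrow> nat \<Rightarrow> nat"
    and V :: "nat \<Rightarrow> nat \<Rightarrow> nat \<Rightarrow> real"
  assumes N_pos: "N \<ge> 1"
    and C0: "C 0 = {1..M}"
    and C_sub: "\<forall>n\<in>{1..N}. C n \<subseteq> {1..M}"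
    and Cap_pos: "\<forall>(n, m)\<in>idx N C. Cap n m > 0"
    and pw_nonneg: "\<forall>(n, m)\<in>idx N C. pw n m \<ge> 0"
    and pw_zero: "\<forall>n\<le>N. pw n 0 = 0"
    and w_nonneg: "w \<ge> 0"
    and mu_supp: "set_pmf mu \<subseteq> actions N C"
    and Qd_in: "\<forall>(n, m)\<in>idx N C. Qd n m \<le> Cap n m"
    and V_lim: "\<forall>(n, m)\<in>idx N C. \<forall>q\<le>Cap n m.
                  (\<lambda>l. V_iter N M C Cap arr pw w mu Qd l n m q) \<longlonglongrightarrow> V n m q"
  shows
    "(\<forall>Q\<in>states N C Cap.
        (\<forall>(n, m)\<in>idx N C. ereal (real (Q (n, m))) \<le> phi_plus N M C Cap arr pw w V (\<lambda>_. 0) n m Q)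
        \<longrightarrow> (\<forall>v\<in>actions N C. Delta N M C Cap arr pw w V (\<lambda>_. 0) v Q \<le> 0)
            \<and> is_arg_min (Jhat N M C Cap arr pw w V Q) (\<lambda>v. v \<in> actions N C) (\<lambda>_. 0))
     \<and> (\<forall>u\<in>actions N C. \<forall>n\<le>N. \<forall>m\<in>C n. u n = m \<longrightarrow>
          (\<forall>Q\<in>states N C Cap.
             phi_minus N M C Cap arr pw w V u n m Q \<le> ereal (real (Q (n, m)))
             \<longrightarrow> (\<forall>v\<in>actions N C. Delta N M C Cap arr pw w V u v Q \<le> 0)
                 \<and> is_arg_min (Jhat N M C Cap arr pw w V Q) (\<lambda>v. v \<in> actions N C) u))
     \<and> (\<forall>u\<in>actions N C. \<forall>m\<in>C 0. u 0 = m \<longrightarrow>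
          (\<forall>n\<in>Nm N C m. \<forall>Q\<in>states N C Cap. \<forall>q1 q2. q1 \<le> q2 \<longrightarrow> q2 \<le> Cap n m \<longrightarrow>
             phi_minus N M C Cap arr pw w V u 0 m (Q((n, m) := q2))
               \<le> phi_minus N M C Cap arr pw w V u 0 m (Q((n, m) := q1))))"
proof -
  have fin: "finite (idx N C)"
  proof (rule finite_subset)
    show "idx N C \<subseteq> {..N} \<times> {1..M}"
    proof -
      have "b \<in> {1..M}" if "a \<le> N" "b \<in> C a" for a b
        using that C0 C_sub[rule_format, of a] by (cases "a = 0") auto
      then show ?thesis by (auto simp: idx_def)
    qed
  qed simp
  have mpos: "m \<ge> 1" if "(n, m) \<in> idx N C" for n m
    using that C0 C_sub[rule_format, of n] by (cases "n = 0") (auto simp: idx_def)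
  have Vm: "V n m q1 \<le> V n m q2" if "(n, m) \<in> idx N C" "q1 \<le> q2" "q2 \<le> Cap n m" for n m q1 q2
  proof (rule LIMSEQ_le)
    show "(\<lambda>l. V_iter N M C Cap arr pw w mu Qd l n m q1) \<longlonglongrightarrow> V n m q1"
      using V_lim that by auto
    show "(\<lambda>l. V_iter N M C Cap arr pw w mu Qd l n m q2) \<longlonglongrightarrow> V n m q2"
      using V_lim that by auto
    show "\<exists>N'. \<forall>l\<ge>N'. V_iter N M C Cap arr pw w mu Qd l n m q1 \<le> V_iter N M C Cap arr pw w mu Qd l n m q2"
      using V_iter_mono that by blast
  qed
  have finPhi: "finite (Phi N M C Cap arr pw w V u n m Q)" for u n m Q
    unfolding Phi_def by simp
  have argmin: "is_arg_min (Jhat N M C Cap arr pw w V Q) (\<lambda>v. v \<in> actions N C) u"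
    if "u \<in> actions N C" "\<forall>v\<in>actions N C. Delta N M C Cap arr pw w V u v Q \<le> 0" for u Q
    using that unfolding is_arg_min_def Delta_def by force
  have zact: "(\<lambda>_. 0) \<in> actions N C" by (simp add: actions_def)
  have P1: "(\<forall>v\<in>actions N C. Delta N M C Cap arr pw w V (\<lambda>_. 0) v Q \<le> 0)"
    if H: "\<forall>(n, m)\<in>idx N C. ereal (real (Q (n, m))) \<le> phi_plus N M C Cap arr pw w V (\<lambda>_. 0) n m Q" for Q
  proof (cases "idx N C = {}")
    case True
    have "v = (\<lambda>_. 0)" if "v \<in> actions N C" for v
    proof
      fix n show "v n = 0"
        using that True by (cases "n \<le> N") (auto simp: actions_def idx_def)
    qed
    then show ?thesis by (auto simp: Delta_def)
  next
    case False
    then obtain n m where nm: "(n, m) \<in> idx N C" by auto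
    let ?S = "Phi N M C Cap arr pw w V (\<lambda>_. 0) n m Q"
    have "ereal (real (Q (n, m))) \<le> phi_plus N M C Cap arr pw w V (\<lambda>_. 0) n m Q" using H nm by auto
    then have ne: "?S \<noteq> {}" and qle: "Q (n, m) \<le> Max ?S"
      unfolding phi_plus_def Let_def by (auto split: if_splits)
    have inS: "Max ?S \<in> ?S" using ne finPhi by (rule Max_in[rotated])
    have nr: "\<not> reset (\<lambda>_. 0) n m" using mpos[OF nm] by (auto simp: reset_def)
    show ?thesis
    proof
      fix v assume v: "v \<in> actions N C"
      show "Delta N M C Cap arr pw w V (\<lambda>_. 0) v Q \<le> 0"
      proof (cases "v = (\<lambda>_. 0)")
        case True then show ?thesis by (simp add: Delta_def)
      next
        case False
        have "Delta N M C Cap arr pw w V (\<lambda>_. 0) v (Q((n,m) := Q (n,m)))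
            \<le> Delta N M C Cap arr pw w V (\<lambda>_. 0) v (Q((n,m) := Max ?S))"
          by (rule key(2)[OF nm fin _ qle nr]) (rule Vm[OF nm], auto)
        also have "\<dots> \<le> 0" using inS v False unfolding Phi_def by auto
        finally show ?thesis by simp
      qed
    qed
  qed
  have P2: "(\<forall>v\<in>actions N C. Delta N M C Cap arr pw w V u v Q \<le> 0)"
    if nm: "(n, m) \<in> idx N C" and un: "u n = m"
      and H: "phi_minus N M C Cap arr pw w V u n m Q \<le> ereal (real (Q (n, m)))" for u n m Q
  proof
    let ?S = "Phi N M C Cap arr pw w V u n m Q"
    from H have ne: "?S \<noteq> {}" and qle: "Min ?S \<le> Q (n, m)"
      unfolding phi_minus_def Let_def by (auto split: if_splits)
    have inS: "Min ?S \<in> ?S" using ne finPhi by (rule Min_in[rotated])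
    have r: "reset u n m" using un by (cases "n = 0") (auto simp: reset_def)
    fix v assume v: "v \<in> actions N C"
    show "Delta N M C Cap arr pw w V u v Q \<le> 0"
    proof (cases "v = u")
      case True then show ?thesis by (simp add: Delta_def)
    next
      case False
      have "Delta N M C Cap arr pw w V u v (Q((n,m) := Q (n,m)))
          \<le> Delta N M C Cap arr pw w V u v (Q((n,m) := Min ?S))"
        by (rule key(1)[OF nm fin _ qle r]) (rule Vm[OF nm], auto)
      also have "\<dots> \<le> 0" using inS v False unfolding Phi_def by auto
      finally show ?thesis by simp
    qed
  qed
  have P3: "phi_minus N M C Cap arr pw w V u 0 m (Q((n, m) := q2))
               \<le> phi_minus N M C Cap arr pw w V u 0 m (Q((n, m) := q1))"
    if u0: "u 0 = m" and n: "n \<in> Nm N C m" and le: "q1 \<le> q2" for u m n Q q1 q2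
  proof -
    have nm: "(n, m) \<in> idx N C" and n0: "n \<noteq> 0" using n by (auto simp: Nm_def idx_def)
    have r: "reset u n m" using u0 by (simp add: reset_def)
    let ?S1 = "Phi N M C Cap arr pw w V u 0 m (Q((n, m) := q1))"
    let ?S2 = "Phi N M C Cap arr pw w V u 0 m (Q((n, m) := q2))"
    have sub: "?S1 \<subseteq> ?S2"
    proof
      fix q assume q: "q \<in> ?S1"
      have "Delta N M C Cap arr pw w V u v ((Q((0, m) := q))((n,m) := q2))
          \<le> Delta N M C Cap arr pw w V u v ((Q((0, m) := q))((n,m) := q1))" for v
        by (rule key(1)[OF nm fin _ le r]) (rule Vm[OF nm], auto)
      moreover have "Q((n, m) := x, (0, m) := q) = (Q((0, m) := q))((n,m) := x)" for x
        using n0 by (auto simp: fun_upd_twist)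
      ultimately show "q \<in> ?S2" using q unfolding Phi_def by (auto intro: order_trans)
    qed
    show ?thesis
    proof (cases "?S1 = {}")
      case True then show ?thesis by (simp add: phi_minus_def)
    next
      case False
      then have "?S2 \<noteq> {}" using sub by auto
      moreover have "Min ?S2 \<le> Min ?S1" using Min_antimono[OF sub False finPhi] .
      ultimately show ?thesis using False by (simp add: phi_minus_def Let_def)
    qed
  qed
  have G1: "\<forall>Q\<in>states N C Cap.
        (\<forall>(n, m)\<in>idx N C. ereal (real (Q (n, m))) \<le> phi_plus N M C Cap arr pw w V (\<lambda>_. 0) n m Q)
        \<longrightarrow> (\<forall>v\<in>actions N C. Delta N M C Cap arr pw w V (\<lambda>_. 0) v Q \<le> 0)
            \<and> is_arg_min (Jhat N M C Cap arr pw w V Q) (\<lambda>v. v \<in> actions N C) (\<lambda>_. 0)"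
  proof (intro ballI impI)
    fix Q assume "Q \<in> states N C Cap"
      and H: "\<forall>(n, m)\<in>idx N C. ereal (real (Q (n, m))) \<le> phi_plus N M C Cap arr pw w V (\<lambda>_. 0) n m Q"
    show "(\<forall>v\<in>actions N C. Delta N M C Cap arr pw w V (\<lambda>_. 0) v Q \<le> 0)
            \<and> is_arg_min (Jhat N M C Cap arr pw w V Q) (\<lambda>v. v \<in> actions N C) (\<lambda>_. 0)"
      using P1[OF H] argmin[OF zact P1[OF H]] by simp
  qed
  have G2: "\<forall>u\<in>actions N C. \<forall>n\<le>N. \<forall>m\<in>C n. u n = m \<longrightarrow>
          (\<forall>Q\<in>states N C Cap.
             phi_minus N M C Cap arr pw w V u n m Q \<le> ereal (real (Q (n, m)))
             \<longrightarrow> (\<forall>v\<in>actions N C. Delta N M C Cap arr pw w V u v Q \<le> 0)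
                 \<and> is_arg_min (Jhat N M C Cap arr pw w V Q) (\<lambda>v. v \<in> actions N C) u)"
  proof (intro ballI allI impI)
    fix u n m Q assume u: "u \<in> actions N C" and n: "n \<le> N" and m: "m \<in> C n" and un: "u n = m"
      and "Q \<in> states N C Cap" and H: "phi_minus N M C Cap arr pw w V u n m Q \<le> ereal (real (Q (n, m)))"
    have nm: "(n, m) \<in> idx N C" using n m by (simp add: idx_def)
    show "(\<forall>v\<in>actions N C. Delta N M C Cap arr pw w V u v Q \<le> 0)
                 \<and> is_arg_min (Jhat N M C Cap arr pw w V Q) (\<lambda>v. v \<in> actions N C) u"
      using P2[OF nm un H] argmin[OF u P2[OF nm un H]] by simp
  qed
  have G3: "\<forall>u\<in>actions N C. \<forall>m\<in>C 0. u 0 = m \<longrightarrow>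
          (\<forall>n\<in>Nm N C m. \<forall>Q\<in>states N C Cap. \<forall>q1 q2. q1 \<le> q2 \<longrightarrow> q2 \<le> Cap n m \<longrightarrow>
             phi_minus N M C Cap arr pw w V u 0 m (Q((n, m) := q2))
               \<le> phi_minus N M C Cap arr pw w V u 0 m (Q((n, m) := q1)))"
    using P3 by blast
  show ?thesis using G1 G2 G3 by blast
qed

end
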